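(* Let $T$ be a countable tree with root $o$, and let $Q$ be a stochastic matrix on $T$ with $q(x,y)>0$ iff $x=y^-$. Let $\lambda\in\mathbb{C}\setminus\{0\}$ and $n\ge1$. Every $\lambda$-polyharmonic function $f$ of order $n$ for $Q$ has an integral representation $$f(x)=\sum_{r=0}^{n-1}\int_{\partial T}K_Q^{(r)}(x,\xi\mid\lambda)\,d\sigma_r(\xi),\qquad x\in T,$$ where the complex distributions $\sigma_0,\dots,\sigma_{n-1}$ are uniquely determined by $f$. Conversely, every function with such a representation is $\lambda$-polyharmonic of order $n$ for $Q$.
   Context: $|x|=d(o,x)$. $x^-$ is the neighbour of $x\ne o$ closer to $o$. $\partial T$ is the set of ends of $T$, and $\partial T_x$ is the set of ends whose geodesic ray from $o$ passes through $x$. $Qf(x)=\sum_{y:\,y^-=x}q(x,y)f(y)$, required to converge absolutely. $f$ is $\lambda$-polyharmonic of order $n$ for $Q$ if $(\lambda I-Q)^nf=0$. $q^{(n)}(o,x)=\prod_{i=1}^n q(x_{i-1},x_i)$ for $\pi(o,x)=[o=x_0,\dots,x_n=x]$. $K_Q(x,\xi\mid\lambda)=\lambda^{|x|}/q^{(|x|)}(o,x)$ if $x$ lies on the ray from $o$ to $\xi$, and $0$ otherwise. $K_Q^{(r)}$ denotes the $r$-th derivative with respect to $\lambda$; for fixed $x$ it is a constant multiple of the indicator of $\partial T_x$. A complex distribution is $\sigma:\{\partial T_x\}\to\mathbb{C}$ with $\sigma(\partial T_x)=\sum_{y^-=x}\sigma(\partial T_y)$, absolutely convergent. The integral of $c\cdot\mathbf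 1_{\partial T_x}$ is $c\,\sigma(\partial T_x)$. *)

theory Defs
  imports "HOL-Analysis.Analysis"
begin

text \<open>Rooted tree on the vertex type 'a: par x is x^- (the neighbour of x closer to the root o),
  meaningful for x \<noteq> rt.\<close>

definition is_rooted_tree :: "('a \<Rightarrow> 'a) \<Rightarrow> 'a \<Rightarrow> bool" where
  "is_rooted_tree par rt \<longleftrightarrow> (\<forall>x. \<exists>k. (par ^^ k) x = rt)"

definition children :: "('a \<Rightarrow> 'a) \<Rightarrow> 'a \<Rightarrow> 'a \<Rightarrow> 'a set" where
  "children par rt x = {y. y \<noteq> rt \<and> par y = x}"

definition tdist :: "('a \<Rightarrow> 'a) \<Rightarrow> 'a \<Rightarrow> 'a \<Rightarrow> nat" where
  "tdist par rt x = (LEAST k. (par ^^ k) x = rt)"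

definition tree_stochastic :: "('a \<Rightarrow> 'a) \<Rightarrow> 'a \<Rightarrow> ('a \<Rightarrow> 'a \<Rightarrow> real) \<Rightarrow> bool" where
  "tree_stochastic par rt q \<longleftrightarrow>
     (\<forall>x y. q x y \<ge> 0) \<and> (\<forall>x. (q x has_sum 1) UNIV) \<and>
     (\<forall>x y. q x y > 0 \<longleftrightarrow> (y \<noteq> rt \<and> par y = x))"

definition Qdefined :: "('a \<Rightarrow> 'a) \<Rightarrow> 'a \<Rightarrow> ('a \<Rightarrow> 'a \<Rightarrow> real) \<Rightarrow> ('a \<Rightarrow> complex) \<Rightarrow> bool" where
  "Qdefined par rt q f \<longleftrightarrow> (\<forall>x. (\<lambda>y. norm (complex_of_real (q x y) * f y)) summable_on children par rt x)"

definition Qop :: "('a \<Rightarrow> 'a) \<Rightarrow> 'a \<Rightarrow> ('a \<Rightarrow> 'a \<Rightarrow> real) \<Rightarrow> ('a \<Rightarrow> complex) \<Rightarrow> 'a \<Rightarrow> complex" where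
  "Qop par rt q f x = (\<Sum>\<^sub>\<infinity>y\<in>children par rt x. complex_of_real (q x y) * f y)"

definition Lop :: "('a \<Rightarrow> 'a) \<Rightarrow> 'a \<Rightarrow> ('a \<Rightarrow> 'a \<Rightarrow> real) \<Rightarrow> complex \<Rightarrow> ('a \<Rightarrow> complex) \<Rightarrow> 'a \<Rightarrow> complex" where
  "Lop par rt q l f x = l * f x - Qop par rt q f x"

definition polyharmonic :: "('a \<Rightarrow> 'a) \<Rightarrow> 'a \<Rightarrow> ('a \<Rightarrow> 'a \<Rightarrow> real) \<Rightarrow> complex \<Rightarrow> nat \<Rightarrow> ('a \<Rightarrow> complex) \<Rightarrow> bool" where
  "polyharmonic par rt q l n f \<longleftrightarrow>
     (\<forall>k<n. Qdefined par rt q ((Lop par rt q l ^^ k) f)) \<and> (Lop par rt q l ^^ n) f = (\<lambda>_. 0)"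

text \<open>Ends of T, represented by geodesic rays starting at rt.\<close>
definition ends :: "('a \<Rightarrow> 'a) \<Rightarrow> 'a \<Rightarrow> (nat \<Rightarrow> 'a) set" where
  "ends par rt = {\<xi>. \<xi> 0 = rt \<and> (\<forall>m. \<xi> (Suc m) \<noteq> rt \<and> par (\<xi> (Suc m)) = \<xi> m)}"

definition bnd :: "('a \<Rightarrow> 'a) \<Rightarrow> 'a \<Rightarrow> 'a \<Rightarrow> (nat \<Rightarrow> 'a) set" where
  "bnd par rt x = {\<xi> \<in> ends par rt. \<xi> (tdist par rt x) = x}"

definition qpath :: "('a \<Rightarrow> 'a) \<Rightarrow> 'a \<Rightarrow> ('a \<Rightarrow> 'a \<Rightarrow> real) \<Rightarrow> 'a \<Rightarrow> real" where
  "qpath par rt q x = (\<Prod>i<tdist par rt x. q ((par ^^ Suc i) x) ((par ^^ i) x))"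

definition Kmartin :: "('a \<Rightarrow> 'a) \<Rightarrow> 'a \<Rightarrow> ('a \<Rightarrow> 'a \<Rightarrow> real) \<Rightarrow> 'a \<Rightarrow> (nat \<Rightarrow> 'a) \<Rightarrow> complex \<Rightarrow> complex" where
  "Kmartin par rt q x \<xi> l =
     (if \<xi> \<in> bnd par rt x then l ^ tdist par rt x / complex_of_real (qpath par rt q x) else 0)"

definition Kderiv :: "('a \<Rightarrow> 'a) \<Rightarrow> 'a \<Rightarrow> ('a \<Rightarrow> 'a \<Rightarrow> real) \<Rightarrow> nat \<Rightarrow> 'a \<Rightarrow> (nat \<Rightarrow> 'a) \<Rightarrow> complex \<Rightarrow> complex" where
  "Kderiv par rt q r x \<xi> l = (deriv ^^ r) (\<lambda>m. Kmartin par rt q x \<xi> m) l"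

text \<open>Complex distributions: set functions on the family {\<partial>T_x} that are absolutely
  convergently additive.\<close>
definition is_distribution :: "('a \<Rightarrow> 'a) \<Rightarrow> 'a \<Rightarrow> ((nat \<Rightarrow> 'a) set \<Rightarrow> complex) \<Rightarrow> bool" where
  "is_distribution par rt \<sigma> \<longleftrightarrow>
     (\<forall>x. (\<lambda>y. norm (\<sigma> (bnd par rt y))) summable_on children par rt x \<and>
          ((\<lambda>y. \<sigma> (bnd par rt y)) has_sum \<sigma> (bnd par rt x)) (children par rt x))"

text \<open>Integral of a function of the form c \<cdot> 1_{\<partial>T_x}: it equals c \<sigma>(\<partial>T_x).\<close>
definition dint :: "('a \<Rightarrow> 'a) \<Rightarrow> 'a \<Rightarrow> ((nat \<Rightarrow> 'a) set \<Rightarrow> complex) \<Rightarrow> ((nat \<Rightarrow> 'a) \<Rightarrow> complex) \<Rightarrow> complex" where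
  "dint par rt \<sigma> \<phi> = (SOME v. \<exists>c x. \<phi> = (\<lambda>\<xi>. c * indicator (bnd par rt x) \<xi>) \<and> v = c * \<sigma> (bnd par rt x))"

definition represents :: "('a \<Rightarrow> 'a) \<Rightarrow> 'a \<Rightarrow> ('a \<Rightarrow> 'a \<Rightarrow> real) \<Rightarrow> complex \<Rightarrow> nat \<Rightarrow>
    (nat \<Rightarrow> (nat \<Rightarrow> 'a) set \<Rightarrow> complex) \<Rightarrow> ('a \<Rightarrow> complex) \<Rightarrow> bool" where
  "represents par rt q l n \<sigma> f \<longleftrightarrow>
     (\<forall>r<n. is_distribution par rt (\<sigma> r)) \<and>
     (\<forall>x. f x = (\<Sum>r<n. dint par rt (\<sigma> r) (\<lambda>\<xi>. Kderiv par rt q r x \<xi> l)))"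

end

theory Submission
  imports Defs
begin

definition ff :: "nat \<Rightarrow> nat \<Rightarrow> nat" where
  "ff r d = (\<Prod>i<r. (d - i))"

lemma ff_0[simp]: "ff 0 d = 1" by (simp add: ff_def)
lemma ff_Suc: "ff (Suc r) d = ff r d * (d - r)" by (simp add: ff_def)
lemma ff_gt: "d < r \<Longrightarrow> ff r d = 0"
  unfolding ff_def by (rule prod_zero) auto
lemma ff_Suc_Suc: "ff (Suc r) (Suc d) = ff (Suc r) d + Suc r * ff r d"
proof -
  have a: "ff (Suc r) (Suc d) = Suc d * ff r d"
    unfolding ff_def by (simp add: prod.lessThan_Suc_shift del: prod.lessThan_Suc)
  show ?thesis
  proof (cases "r \<le> d")
    case True
    then show ?thesis by (subst a, subst ff_Suc) (simp add: algebra_simps)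
  next
    case False
    then show ?thesis using ff_gt[of d r] by (subst a, subst ff_Suc) simp
  qed
qed

lemma deriv_iter_pow:
  "(deriv ^^ r) (\<lambda>m::complex. C * m ^ d) = (\<lambda>m. C * of_nat (ff r d) * m ^ (d - r))"
proof (induction r)
  case 0
  then show ?case by simp
next
  case (Suc r)
  have "(deriv ^^ Suc r) (\<lambda>m::complex. C * m ^ d) = deriv (\<lambda>m. C * of_nat (ff r d) * m ^ (d - r))"
    using Suc by simp
  also have "\<dots> = (\<lambda>m. C * of_nat (ff (Suc r) d) * m ^ (d - Suc r))"
  proof
    fix m :: complex
    have "((\<lambda>m. C * of_nat (ff r d) * m ^ (d - r)) has_field_derivative
        C * of_nat (ff r d) * (of_nat (d - r) * (1 * m ^ (d - r - Suc 0)))) (at m)"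
      by (intro DERIV_cmult DERIV_power DERIV_ident)
    then show "deriv (\<lambda>m. C * of_nat (ff r d) * m ^ (d - r)) m = C * of_nat (ff (Suc r) d) * m ^ (d - Suc r)"
      by (simp add: DERIV_imp_deriv ff_Suc)
  qed
  finally show ?case .
qed


lemma has_sum_finsum:
  fixes f :: "'i \<Rightarrow> 'b \<Rightarrow> 'c::topological_comm_monoid_add"
  assumes "finite I" "\<And>i. i \<in> I \<Longrightarrow> (f i has_sum a i) A"
  shows "((\<lambda>y. \<Sum>i\<in>I. f i y) has_sum (\<Sum>i\<in>I. a i)) A"
  using assms
proof (induction I rule: finite_induct)
  case empty then show ?case by simp
next
  case (insert i I)
  have "((\<lambda>y. f i y + (\<Sum>i\<in>I. f i y)) has_sum (a i + (\<Sum>i\<in>I. a i))) A"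
    using insert by (intro has_sum_add) auto
  then show ?case using insert by simp
qed

lemma norm_summable_finsum:
  fixes f :: "'i \<Rightarrow> 'b \<Rightarrow> complex"
  assumes "finite I" "\<And>i. i \<in> I \<Longrightarrow> (\<lambda>y. norm (f i y)) summable_on A"
  shows "(\<lambda>y. norm (\<Sum>i\<in>I. f i y)) summable_on A"
proof (rule Infinite_Sum.abs_summable_on_comparison_test')
  have "((\<lambda>y. \<Sum>i\<in>I. norm (f i y)) has_sum (\<Sum>i\<in>I. infsum (\<lambda>y. norm (f i y)) A)) A"
    using assms by (intro has_sum_finsum) auto
  thus "(\<lambda>y. \<Sum>i\<in>I. norm (f i y)) summable_on A" unfolding summable_on_def by blast
  fix y show "norm (\<Sum>i\<in>I. f i y) \<le> (\<Sum>i\<in>I. norm (f i y))"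
    by (rule norm_sum)
qed

lemma pow_helper: "(of_nat (ff (Suc r) d) :: complex) * l ^ (d - r) = l * of_nat (ff (Suc r) d) * l ^ (d - Suc r)"
proof (cases "r < d")
  case True
  hence "d - r = Suc (d - Suc r)" by simp
  thus ?thesis by simp
next
  case False thus ?thesis using ff_gt[of d "Suc r"] by simp
qed

locale tr =
  fixes par :: "'a \<Rightarrow> 'a" and rt :: 'a and q :: "'a \<Rightarrow> 'a \<Rightarrow> real" and l :: complex
  assumes rooted: "is_rooted_tree par rt"
    and stoch: "tree_stochastic par rt q"
    and lnz: "l \<noteq> 0"
begin

abbreviation "C \<equiv> children par rt"
abbreviation "td \<equiv> tdist par rt"

lemma td_root: "(par ^^ td x) x = rt"
  using rooted unfolding is_rooted_tree_def tdist_def by (meson LeastI_ex)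

lemma td_less: "k < td x \<Longrightarrow> (par ^^ k) x \<noteq> rt"
  unfolding tdist_def using not_less_Least by blast

lemma td_le: "(par ^^ k) x = rt \<Longrightarrow> td x \<le> k"
  unfolding tdist_def by (rule Least_le)

lemma children_iff: "y \<in> C x \<longleftrightarrow> y \<noteq> rt \<and> par y = x"
  by (simp add: children_def)

lemma td_child: assumes "y \<in> C x" shows "td y = Suc (td x)"
proof -
  have y: "y \<noteq> rt" "par y = x" using assms children_iff by auto
  have "td y \<noteq> 0" using td_root[of y] y by (metis funpow_0)
  then obtain m where m: "td y = Suc m" using not0_implies_Suc by blast
  have "(par ^^ m) x = rt" using td_root[of y] m y by (simp only: funpow_Suc_right o_apply)
  hence "td x \<le> m" by (rule td_le)
  moreover have "(par ^^ Suc (td x)) y = (par ^^ td x) (par y)" by (metis funpow_Suc_right comp_apply)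
  hence "(par ^^ Suc (td x)) y = rt" using td_root[of x] y by simp
  hence "td y \<le> Suc (td x)" by (rule td_le)
  ultimately show ?thesis using m by simp
qed

lemma q_nonneg: "q x y \<ge> 0" using stoch unfolding tree_stochastic_def by auto
lemma q_pos_iff: "q x y > 0 \<longleftrightarrow> y \<in> C x"
  using stoch unfolding tree_stochastic_def children_iff by auto

lemma qpath_child: assumes "y \<in> C x" shows "qpath par rt q y = q x y * qpath par rt q x"
proof -
  have y: "par y = x" using assms children_iff by auto
  have e: "(par ^^ Suc k) y = (par ^^ k) x" for k using y by (metis funpow_Suc_right comp_apply)
  have "qpath par rt q y = (\<Prod>i<Suc (td x). q ((par ^^ Suc i) y) ((par ^^ i) y))"
    unfolding qpath_def td_child[OF assms] ..
  also have "\<dots> = q ((par ^^ Suc 0) y) ((par ^^ 0) y) * (\<Prod>i<td x. q ((par ^^ Suc (Suc i)) y) ((par ^^ Suc i) y))"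
    by (rule prod.lessThan_Suc_shift)
  also have "\<dots> = q x y * qpath par rt q x"
    unfolding qpath_def e by simp
  finally show ?thesis .
qed

lemma qpath_pos: "qpath par rt q x > 0"
  unfolding qpath_def
proof (rule prod_pos)
  fix i assume "i \<in> {..<td x}"
  hence "(par ^^ i) x \<noteq> rt" using td_less by auto
  hence "(par ^^ i) x \<in> C ((par ^^ Suc i) x)" by (simp add: children_iff)
  thus "0 < q ((par ^^ Suc i) x) ((par ^^ i) x)" using q_pos_iff by blast
qed

lemma children_ne: "C x \<noteq> {}"
proof
  assume e: "C x = {}"
  have "q x y = 0" for y using q_nonneg[of x y] q_pos_iff[of x y] e by auto
  hence "q x = (\<lambda>_. 0)" by auto
  hence "(q x has_sum 0) UNIV" by simp
  moreover have "(q x has_sum 1) UNIV" using stoch unfolding tree_stochastic_def by auto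
  ultimately show False using has_sum_unique by fastforce
qed


abbreviation "E \<equiv> ends par rt"
abbreviation "B \<equiv> bnd par rt"

lemma ends_par: "\<xi> \<in> E \<Longrightarrow> (par ^^ k) (\<xi> (i + k)) = \<xi> i"
proof (induction k)
  case 0 then show ?case by simp
next
  case (Suc k)
  have "par (\<xi> (Suc (i + k))) = \<xi> (i + k)" using Suc.prems unfolding ends_def by auto
  hence "(par ^^ Suc k) (\<xi> (i + Suc k)) = (par ^^ k) (\<xi> (i + k))"
    by (metis add_Suc_right funpow_Suc_right comp_apply)
  then show ?case using Suc by simp
qed

lemma ends_td: assumes "\<xi> \<in> E" shows "td (\<xi> m) = m"
proof -
  have e: "\<xi> 0 = rt" "\<And>j. \<xi> (Suc j) \<noteq> rt" using assms unfolding ends_def by auto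
  have "(par ^^ m) (\<xi> m) = \<xi> 0" using ends_par[OF assms, where k=m and i=0] by simp
  hence r: "(par ^^ m) (\<xi> m) = rt" using e by simp
  have nr: "(par ^^ k) (\<xi> m) \<noteq> rt" if "k < m" for k
  proof -
    define j where "j = m - k - 1"
    have j: "m = Suc j + k" using that unfolding j_def by simp
    have "(par ^^ k) (\<xi> (Suc j + k)) = \<xi> (Suc j)" by (rule ends_par[OF assms])
    thus ?thesis using e(2)[of j] j by simp
  qed
  have "m \<le> k" if "(par ^^ k) (\<xi> m) = rt" for k
  proof (rule ccontr)
    assume "\<not> m \<le> k" hence "k < m" by simp
    thus False using nr that by blast
  qed
  thus ?thesis using r unfolding tdist_def by (intro Least_equality) auto
qed

lemma bnd_level: assumes "\<eta> \<in> B y" "i \<le> td y" shows "\<eta> i = (par ^^ (td y - i)) y"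
proof -
  have "\<eta> \<in> E" "\<eta> (td y) = y" using assms unfolding bnd_def by auto
  thus ?thesis using ends_par[of \<eta> "td y - i" i] assms(2) by simp
qed

definition ch :: "'a \<Rightarrow> 'a" where "ch v = (SOME y. y \<in> C v)"

lemma ch_child: "ch v \<in> C v"
  unfolding ch_def using children_ne[of v] by (simp add: some_in_eq)

lemma bnd_ne: "B x \<noteq> {}"
proof -
  define d where "d = td x"
  define \<xi> where "\<xi> i = (if i \<le> d then (par ^^ (d - i)) x else (ch ^^ (i - d)) x)" for i
  have h0: "\<xi> 0 = rt" unfolding \<xi>_def d_def using td_root by simp
  have hs: "\<xi> (Suc m) \<noteq> rt \<and> par (\<xi> (Suc m)) = \<xi> m" for m
    proof (cases "Suc m \<le> d")
      case True
      have "(par ^^ (d - Suc m)) x \<noteq> rt" using td_less True d_def by simp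
      moreover have "par ((par ^^ (d - Suc m)) x) = (par ^^ (d - m)) x"
        using True by (metis Suc_diff_Suc Suc_le_lessD comp_apply funpow.simps(2))
      ultimately show ?thesis using True unfolding \<xi>_def by simp
    next
      case False
      hence "\<xi> (Suc m) = ch ((ch ^^ (m - d)) x)" unfolding \<xi>_def by (simp add: Suc_diff_le)
      moreover have "\<xi> m = (ch ^^ (m - d)) x" unfolding \<xi>_def using False by auto
      moreover have "ch ((ch ^^ (m - d)) x) \<in> C ((ch ^^ (m - d)) x)" by (rule ch_child)
      ultimately show ?thesis by (simp add: children_iff)
    qed
  have "\<xi> \<in> E" unfolding ends_def using h0 hs by auto
  moreover have "\<xi> (td x) = x" unfolding \<xi>_def d_def by simp
  ultimately show ?thesis unfolding bnd_def by auto
qed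

definition additive :: "('a \<Rightarrow> complex) \<Rightarrow> bool" where
  "additive s \<longleftrightarrow> (\<forall>x. (\<lambda>y. norm (s y)) summable_on C x \<and> (s has_sum s x) (C x))"

lemma bnd_eq_step:
  assumes eq: "B x = B y" and lt: "td x < td y"
  obtains c where "C x = {c}" "B c = B x" "td c = Suc (td x)"
proof -
  obtain \<xi> where \<xi>: "\<xi> \<in> B x" using bnd_ne by blast
  hence \<xi>E: "\<xi> \<in> E" "\<xi> (td x) = x" unfolding bnd_def by auto
  define c where "c = \<xi> (Suc (td x))"
  have cC: "c \<in> C x" using \<xi>E unfolding c_def ends_def children_iff by auto
  have cl: "c = (par ^^ (td y - Suc (td x))) y"
    using bnd_level[of \<xi> y "Suc (td x)"] \<xi> eq lt c_def by auto
  have key: "\<eta> (Suc (td x)) = c" if "\<eta> \<in> B x" for \<eta>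
    using bnd_level[of \<eta> y "Suc (td x)"] that eq lt cl by auto
  have "C x = {c}"
  proof (rule equalityI)
    show "{c} \<subseteq> C x" using cC by auto
    show "C x \<subseteq> {c}"
    proof
      fix z assume z: "z \<in> C x"
      obtain \<eta> where \<eta>: "\<eta> \<in> B z" using bnd_ne by blast
      have tz: "td z = Suc (td x)" using td_child[OF z] .
      have "\<eta> \<in> E" "\<eta> (Suc (td x)) = z" using \<eta> tz unfolding bnd_def by auto
      moreover have "par (\<eta> (Suc (td x))) = \<eta> (td x)" using calculation(1) unfolding ends_def by blast
      moreover have "par z = x" using z by (simp add: children_iff)
      ultimately have "\<eta> (td x) = x" by simp
      hence "\<eta> \<in> B x" using \<open>\<eta> \<in> E\<close> unfolding bnd_def by auto
      thus "z \<in> {c}" using key \<open>\<eta> (Suc (td x)) = z\<close> by auto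
    qed
  qed
  moreover have "B c = B x"
  proof (rule equalityI)
    show "B c \<subseteq> B x"
    proof
      fix \<eta> assume \<eta>: "\<eta> \<in> B c"
      have "\<eta> \<in> E" "\<eta> (Suc (td x)) = c" using \<eta> td_child[OF cC] unfolding bnd_def by auto
      moreover have "par (\<eta> (Suc (td x))) = \<eta> (td x)" using calculation(1) unfolding ends_def by blast
      moreover have "par c = x" using cC by (simp add: children_iff)
      ultimately have "\<eta> (td x) = x" by simp
      thus "\<eta> \<in> B x" using \<open>\<eta> \<in> E\<close> unfolding bnd_def by auto
    qed
    show "B x \<subseteq> B c"
    proof
      fix \<eta> assume \<eta>: "\<eta> \<in> B x"
      thus "\<eta> \<in> B c" using key[OF \<eta>] td_child[OF cC] unfolding bnd_def by auto
    qed
  qed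
  ultimately show ?thesis using that td_child[OF cC] by blast
qed

lemma additive_single: assumes "additive s" "C x = {c}" shows "s x = s c"
proof -
  have "(s has_sum s x) {c}" using assms unfolding additive_def by metis
  moreover have "(s has_sum s c) {c}" using has_sum_finite[of "{c}" s] by simp
  ultimately show ?thesis using has_sum_unique by blast
qed

lemma bnd_consistent_aux:
  assumes "additive s" shows "B x = B y \<Longrightarrow> td x \<le> td y \<Longrightarrow> s x = s y"
proof (induction "td y - td x" arbitrary: x)
  case 0
  obtain \<xi> where "\<xi> \<in> B x" using bnd_ne by blast
  hence "x = y" using 0 unfolding bnd_def by auto
  then show ?case by simp
next
  case (Suc k)
  have lt: "td x < td y" using Suc.hyps(2) by arith
  obtain c where c: "C x = {c}" "B c = B x" "td c = Suc (td x)"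
    using bnd_eq_step[OF Suc.prems(1) lt] by blast
  have "s c = s y" using Suc.hyps(1)[of c] Suc.hyps(2) Suc.prems c by auto
  thus ?case using additive_single[OF assms c(1)] by simp
qed

lemma bnd_consistent: assumes "additive s" "B x = B y" shows "s x = s y"
proof (cases "td x \<le> td y")
  case True thus ?thesis using bnd_consistent_aux[OF assms(1)] assms(2) by blast
next
  case False thus ?thesis using bnd_consistent_aux[OF assms(1), of y x] assms(2) by simp
qed

lemma dint_ind: "dint par rt \<sigma> (\<lambda>\<xi>. c * indicator (B x) \<xi>) = c * \<sigma> (B x)"
  unfolding dint_def
proof (rule some_equality)
  show "\<exists>c' x'. (\<lambda>\<xi>. c * indicator (B x) \<xi>) = (\<lambda>\<xi>. c' * indicator (B x') \<xi>) \<and> c * \<sigma> (B x) = c' * \<sigma> (B x')"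
    by blast
  fix v assume "\<exists>c' x'. (\<lambda>\<xi>. c * indicator (B x) \<xi>) = (\<lambda>\<xi>. c' * indicator (B x') \<xi>) \<and> v = c' * \<sigma> (B x')"
  then obtain c' x' where fe: "(\<lambda>\<xi>. c * indicator (B x) \<xi>) = (\<lambda>\<xi>. c' * indicator (B x') \<xi>)"
    and v: "v = c' * \<sigma> (B x')" by blast
  have pt: "c * indicator (B x) \<xi> = c' * indicator (B x') \<xi>" for \<xi> using fe by metis
  obtain \<xi>1 where \<xi>1: "\<xi>1 \<in> B x" using bnd_ne by blast
  obtain \<xi>2 where \<xi>2: "\<xi>2 \<in> B x'" using bnd_ne by blast
  show "v = c * \<sigma> (B x)"
  proof (cases "c = 0")
    case True
    hence "c' = 0" using pt[of \<xi>2] \<xi>2 by (auto simp: indicator_def split: if_splits)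
    thus ?thesis using v True by simp
  next
    case False
    have "c' \<noteq> 0" using pt[of \<xi>1] \<xi>1 False by (auto simp: indicator_def split: if_splits)
    have "B x = B x'"
    proof (intro set_eqI iffI)
      fix \<xi> assume "\<xi> \<in> B x" thus "\<xi> \<in> B x'" using pt[of \<xi>] False by (auto simp: indicator_def split: if_splits)
    next
      fix \<xi> assume "\<xi> \<in> B x'" thus "\<xi> \<in> B x" using pt[of \<xi>] \<open>c' \<noteq> 0\<close> by (auto simp: indicator_def split: if_splits)
    qed
    moreover have "c = c'" using pt[of \<xi>1] \<xi>1 calculation by simp
    ultimately show ?thesis using v by simp
  qed
qed

definition acoef :: "nat \<Rightarrow> 'a \<Rightarrow> complex" where
  "acoef r x = of_nat (ff r (td x)) * l ^ (td x - r) / complex_of_real (qpath par rt q x)"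

lemma Kderiv_eq: "Kderiv par rt q r x \<xi> l = acoef r x * indicator (B x) \<xi>"
proof -
  define K where "K = (indicator (B x) \<xi> / complex_of_real (qpath par rt q x) :: complex)"
  have "(\<lambda>m. Kmartin par rt q x \<xi> m) = (\<lambda>m. K * m ^ td x)"
    unfolding Kmartin_def K_def by (auto simp: indicator_def)
  hence "Kderiv par rt q r x \<xi> l = (deriv ^^ r) (\<lambda>m. K * m ^ td x) l"
    unfolding Kderiv_def by simp
  also have "\<dots> = K * of_nat (ff r (td x)) * l ^ (td x - r)"
    by (simp only: deriv_iter_pow)
  finally have "Kderiv par rt q r x \<xi> l = K * of_nat (ff r (td x)) * l ^ (td x - r)" .
  thus ?thesis unfolding acoef_def K_def by simp
qed


lemma additive_cmult: "additive s \<Longrightarrow> additive (\<lambda>x. c * s x)"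
  unfolding additive_def
  by (auto simp: norm_mult intro: summable_on_cmult_right has_sum_cmult_right)

lemma additive_add: assumes "additive s" "additive t" shows "additive (\<lambda>x. s x + t x)"
  unfolding additive_def
proof (intro allI conjI)
  fix x
  show "(\<lambda>y. norm (s y + t y)) summable_on C x"
  proof (rule Infinite_Sum.abs_summable_on_comparison_test')
    show "(\<lambda>y. norm (s y) + norm (t y)) summable_on C x"
      using assms unfolding additive_def by (intro summable_on_add) auto
    fix y show "norm (s y + t y) \<le> norm (s y) + norm (t y)" by (rule norm_triangle_ineq)
  qed
  show "((\<lambda>x. s x + t x) has_sum s x + t x) (C x)"
    using assms unfolding additive_def by (intro has_sum_add) auto
qed

lemma additive_zero: "additive (\<lambda>_. 0)"
  unfolding additive_def by simp

lemma additive_diff: assumes "additive s" "additive t" shows "additive (\<lambda>x. s x - t x)"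
  using additive_add[OF assms(1) additive_cmult[OF assms(2), of "-1"]] by simp

definition rep :: "nat \<Rightarrow> (nat \<Rightarrow> 'a \<Rightarrow> complex) \<Rightarrow> ('a \<Rightarrow> complex) \<Rightarrow> bool" where
  "rep n s f \<longleftrightarrow> (\<forall>r<n. additive (s r)) \<and> (\<forall>x. f x = (\<Sum>r<n. acoef r x * s r x))"

lemma acoef0_nz: "acoef 0 x \<noteq> 0"
  unfolding acoef_def using qpath_pos[of x] lnz by simp

lemma acoef_child: assumes "y \<in> C x"
  shows "complex_of_real (q x y) * acoef r y = l * acoef r x + of_nat r * acoef (r - 1) x"
proof -
  define d where "d = td x"
  have ty: "td y = Suc d" using td_child[OF assms] d_def by simp
  have qy: "qpath par rt q y = q x y * qpath par rt q x" by (rule qpath_child[OF assms])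
  have qp: "complex_of_real (qpath par rt q x) \<noteq> 0" using qpath_pos[of x] by simp
  have qq: "complex_of_real (q x y) \<noteq> 0" using q_pos_iff[of x y] assms by simp
  have lhs: "complex_of_real (q x y) * acoef r y = of_nat (ff r (Suc d)) * l ^ (Suc d - r) / complex_of_real (qpath par rt q x)"
    unfolding acoef_def ty qy using qq by (simp add: field_simps)
  have key: "of_nat (ff r (Suc d)) * l ^ (Suc d - r) = l * (of_nat (ff r d) * l ^ (d - r)) + of_nat r * (of_nat (ff (r - 1) d) * l ^ (d - (r - 1)))"
  proof (cases r)
    case 0 then show ?thesis by simp
  next
    case (Suc r')
    have "of_nat (ff r (Suc d)) * l ^ (Suc d - r) = (of_nat (ff (Suc r') d) + of_nat (Suc r') * of_nat (ff r' d)) * l ^ (d - r')"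
      unfolding Suc ff_Suc_Suc diff_Suc_Suc of_nat_add of_nat_mult ..
    also have "\<dots> = of_nat (ff (Suc r') d) * l ^ (d - r') + of_nat (Suc r') * (of_nat (ff r' d) * l ^ (d - r'))"
      by (simp add: algebra_simps)
    also have "\<dots> = l * (of_nat (ff (Suc r') d) * l ^ (d - Suc r')) + of_nat (Suc r') * (of_nat (ff r' d) * l ^ (d - r'))"
      using pow_helper[of r' d] by (simp add: algebra_simps)
    finally have fin: "of_nat (ff r (Suc d)) * l ^ (Suc d - r) = l * (of_nat (ff (Suc r') d) * l ^ (d - Suc r')) + of_nat (Suc r') * (of_nat (ff r' d) * l ^ (d - r'))" .
    show ?thesis using fin unfolding Suc diff_Suc_1 by assumption
  qed
  have rhs: "l * acoef r x + of_nat r * acoef (r - 1) x = (l * (of_nat (ff r d) * l ^ (d - r)) + of_nat r * (of_nat (ff (r - 1) d) * l ^ (d - (r - 1)))) / complex_of_real (qpath par rt q x)"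
    unfolding acoef_def d_def by (simp add: add_divide_distrib)
  show ?thesis using lhs key rhs by simp
qed


lemma rep_step:
  assumes "rep (Suc n) s f"
  shows "Qdefined par rt q f \<and> rep n (\<lambda>r x. - of_nat (Suc r) * s (Suc r) x) (Lop par rt q l f)"
proof -
  have add: "\<And>r. r < Suc n \<Longrightarrow> additive (s r)"
    and fx: "\<And>x. f x = (\<Sum>r<Suc n. acoef r x * s r x)" using assms unfolding rep_def by auto
  define b where "b x r = l * acoef r x + of_nat r * acoef (r - 1) x" for x r
  have eqC: "of_real (q x y) * f y = (\<Sum>r<Suc n. b x r * s r y)" if "y \<in> C x" for x y
  proof -
    have "of_real (q x y) * f y = (\<Sum>r<Suc n. (of_real (q x y) * acoef r y) * s r y)"
      unfolding fx[of y] by (simp only: sum_distrib_left mult.assoc)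
    also have "\<dots> = (\<Sum>r<Suc n. b x r * s r y)"
      using acoef_child[OF that] unfolding b_def by simp
    finally show ?thesis .
  qed
  have hs: "((\<lambda>y. of_real (q x y) * f y) has_sum (\<Sum>r<Suc n. b x r * s r x)) (C x)" for x
  proof -
    have "((\<lambda>y. \<Sum>r<Suc n. b x r * s r y) has_sum (\<Sum>r<Suc n. b x r * s r x)) (C x)"
    proof (rule has_sum_finsum)
      fix r assume "r \<in> {..<Suc n}"
      hence "(s r has_sum s r x) (C x)" using add unfolding additive_def by auto
      thus "((\<lambda>y. b x r * s r y) has_sum b x r * s r x) (C x)" by (rule has_sum_cmult_right)
    qed simp
    moreover have "((\<lambda>y. of_real (q x y) * f y) has_sum (\<Sum>r<Suc n. b x r * s r x)) (C x) \<longleftrightarrow>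
        ((\<lambda>y. \<Sum>r<Suc n. b x r * s r y) has_sum (\<Sum>r<Suc n. b x r * s r x)) (C x)"
      by (rule has_sum_cong) (rule eqC)
    ultimately show ?thesis by simp
  qed
  have Qd: "Qdefined par rt q f"
    unfolding Qdefined_def
  proof
    fix x
    have "(\<lambda>y. norm (\<Sum>r<Suc n. b x r * s r y)) summable_on C x"
    proof (rule norm_summable_finsum)
      fix r assume "r \<in> {..<Suc n}"
      hence "(\<lambda>y. norm (s r y)) summable_on C x" using add unfolding additive_def by auto
      hence "(\<lambda>y. norm (b x r) * norm (s r y)) summable_on C x" by (rule summable_on_cmult_right)
      thus "(\<lambda>y. norm (b x r * s r y)) summable_on C x" by (simp add: norm_mult)
    qed simp
    moreover have "(\<lambda>y. norm (complex_of_real (q x y) * f y)) summable_on C x \<longleftrightarrow>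
       (\<lambda>y. norm (\<Sum>r<Suc n. b x r * s r y)) summable_on C x"
      by (rule summable_on_cong) (simp add: eqC)
    ultimately show "(\<lambda>y. norm (complex_of_real (q x y) * f y)) summable_on C x" by simp
  qed
  have Lx: "Lop par rt q l f x = (\<Sum>r<n. acoef r x * (- of_nat (Suc r) * s (Suc r) x))" for x
  proof -
    have "Qop par rt q f x = (\<Sum>r<Suc n. b x r * s r x)" unfolding Qop_def by (rule infsumI[OF hs])
    hence "Lop par rt q l f x = (\<Sum>r<Suc n. l * (acoef r x * s r x)) - (\<Sum>r<Suc n. b x r * s r x)"
      unfolding Lop_def fx[of x] by (simp only: sum_distrib_left)
    also have "\<dots> = (\<Sum>r<Suc n. l * (acoef r x * s r x) - b x r * s r x)"
      by (simp only: sum_subtractf)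
    also have "\<dots> = (\<Sum>r<Suc n. - (of_nat r * acoef (r - 1) x) * s r x)"
      unfolding b_def by (intro sum.cong refl) (simp add: algebra_simps)
    also have "\<dots> = (\<Sum>r<n. - (of_nat (Suc r) * acoef r x) * s (Suc r) x)"
      by (subst sum.lessThan_Suc_shift) simp
    also have "\<dots> = (\<Sum>r<n. acoef r x * (- of_nat (Suc r) * s (Suc r) x))"
      by (intro sum.cong refl) (simp add: algebra_simps)
    finally show ?thesis .
  qed
  have "rep n (\<lambda>r x. - of_nat (Suc r) * s (Suc r) x) (Lop par rt q l f)"
    unfolding rep_def using Lx add additive_cmult by auto
  thus ?thesis using Qd by blast
qed

lemma polyharmonic_Suc:
  "polyharmonic par rt q l (Suc n) f \<longleftrightarrow> Qdefined par rt q f \<and> polyharmonic par rt q l n (Lop par rt q l f)"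
proof -
  have e: "(Lop par rt q l ^^ Suc k) f = (Lop par rt q l ^^ k) (Lop par rt q l f)" for k
    by (metis funpow_Suc_right comp_apply)
  let ?Q = "Qdefined par rt q" and ?L = "Lop par rt q l"
  have A: "(\<forall>k<Suc n. ?Q ((?L ^^ k) f)) \<longleftrightarrow> ?Q f \<and> (\<forall>k<n. ?Q ((?L ^^ k) (?L f)))"
  proof
    assume h: "\<forall>k<Suc n. ?Q ((?L ^^ k) f)"
    have "?Q f" using h[rule_format, of 0] by simp
    moreover have "?Q ((?L ^^ k) (?L f))" if "k < n" for k
      using h[rule_format, of "Suc k"] that unfolding e by simp
    ultimately show "?Q f \<and> (\<forall>k<n. ?Q ((?L ^^ k) (?L f)))" by blast
  next
    assume h: "?Q f \<and> (\<forall>k<n. ?Q ((?L ^^ k) (?L f)))"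
    show "\<forall>k<Suc n. ?Q ((?L ^^ k) f)"
    proof (intro allI impI)
      fix k assume k: "k < Suc n"
      show "?Q ((?L ^^ k) f)"
      proof (cases k)
        case 0 thus ?thesis using h by simp
      next
        case (Suc j) thus ?thesis using h k e[of j] by (simp del: funpow.simps)
      qed
    qed
  qed
  show ?thesis unfolding polyharmonic_def A e by blast
qed

lemma rep_polyharmonic: "rep n s f \<Longrightarrow> polyharmonic par rt q l n f"
proof (induction n arbitrary: s f)
  case 0
  hence "f = (\<lambda>_. 0)" unfolding rep_def by auto
  then show ?case unfolding polyharmonic_def by simp
next
  case (Suc n)
  then show ?case using rep_step[OF Suc.prems] Suc.IH polyharmonic_Suc by blast
qed

lemma Lop_zero: "Lop par rt q l (\<lambda>_. 0) = (\<lambda>_. 0)"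
  unfolding Lop_def Qop_def by simp

lemma rep_zero: "rep n s (\<lambda>_. 0) \<Longrightarrow> r < n \<Longrightarrow> s r x = 0"
proof (induction n arbitrary: s r x)
  case 0 then show ?case by simp
next
  case (Suc n)
  have st: "rep n (\<lambda>r x. - of_nat (Suc r) * s (Suc r) x) (\<lambda>_. 0)"
    using rep_step[OF Suc.prems(1)] Lop_zero by simp
  have hi: "s (Suc r') x' = 0" if "r' < n" for r' x'
  proof -
    have "- of_nat (Suc r') * s (Suc r') x' = 0" using Suc.IH[OF st that, of x'] by simp
    moreover have "- (of_nat (Suc r') :: complex) \<noteq> 0" by (simp only: neg_equal_0_iff_equal of_nat_eq_0_iff)
    ultimately show ?thesis by simp
  qed
  show ?case
  proof (cases r)
    case (Suc r') thus ?thesis using hi Suc.prems(2) by simp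
  next
    case 0
    have "0 = (\<Sum>r<Suc n. acoef r x * s r x)" using Suc.prems(1) unfolding rep_def by metis
    also have "\<dots> = acoef 0 x * s 0 x"
      by (subst sum.lessThan_Suc_shift) (simp add: hi)
    finally show ?thesis using 0 acoef0_nz[of x] by simp
  qed
qed

lemma rep_add: "rep n s f \<Longrightarrow> rep n t g \<Longrightarrow> rep n (\<lambda>r x. s r x + t r x) (\<lambda>x. f x + g x)"
  unfolding rep_def by (auto simp: additive_add sum.distrib algebra_simps)

lemma rep_diff: "rep n s f \<Longrightarrow> rep n t g \<Longrightarrow> rep n (\<lambda>r x. s r x - t r x) (\<lambda>x. f x - g x)"
  unfolding rep_def by (auto simp: additive_diff sum_subtractf algebra_simps)


lemma Qdefined_summable: "Qdefined par rt q f \<Longrightarrow> (\<lambda>y. complex_of_real (q x y) * f y) summable_on C x"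
  unfolding Qdefined_def by (rule abs_summable_summable) auto

lemma Qdefined_diff:
  assumes "Qdefined par rt q f" "Qdefined par rt q g"
  shows "Qdefined par rt q (\<lambda>x. f x - g x)"
  unfolding Qdefined_def
proof
  fix x
  show "(\<lambda>y. norm (complex_of_real (q x y) * (f y - g y))) summable_on C x"
  proof (rule Infinite_Sum.abs_summable_on_comparison_test')
    show "(\<lambda>y. norm (complex_of_real (q x y) * f y) + norm (complex_of_real (q x y) * g y)) summable_on C x"
      using assms unfolding Qdefined_def by (intro summable_on_add) auto
    fix y show "norm (complex_of_real (q x y) * (f y - g y)) \<le> norm (complex_of_real (q x y) * f y) + norm (complex_of_real (q x y) * g y)"
      by (simp only: right_diff_distrib) (rule norm_triangle_ineq4)
  qed
qed

lemma Lop_diff: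
  assumes "Qdefined par rt q f" "Qdefined par rt q g"
  shows "Lop par rt q l (\<lambda>x. f x - g x) x = Lop par rt q l f x - Lop par rt q l g x"
proof -
  have hf: "((\<lambda>y. complex_of_real (q x y) * f y) has_sum Qop par rt q f x) (C x)"
    unfolding Qop_def using Qdefined_summable[OF assms(1)] by simp
  have hg: "((\<lambda>y. complex_of_real (q x y) * g y) has_sum Qop par rt q g x) (C x)"
    unfolding Qop_def using Qdefined_summable[OF assms(2)] by simp
  have "((\<lambda>y. complex_of_real (q x y) * f y + (-1) * (complex_of_real (q x y) * g y)) has_sum
      (Qop par rt q f x + (-1) * Qop par rt q g x)) (C x)"
    by (intro has_sum_add has_sum_cmult_right hf hg)
  moreover have "(\<lambda>y. complex_of_real (q x y) * f y + (-1) * (complex_of_real (q x y) * g y)) =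
      (\<lambda>y. complex_of_real (q x y) * (f y - g y))" by (simp add: right_diff_distrib)
  moreover have "Qop par rt q f x + (-1) * Qop par rt q g x = Qop par rt q f x - Qop par rt q g x" by simp
  ultimately have "((\<lambda>y. complex_of_real (q x y) * (f y - g y)) has_sum (Qop par rt q f x - Qop par rt q g x)) (C x)"
    by simp
  hence "Qop par rt q (\<lambda>x. f x - g x) x = Qop par rt q f x - Qop par rt q g x"
    unfolding Qop_def by (rule infsumI)
  thus ?thesis unfolding Lop_def by (simp add: algebra_simps)
qed

lemma harmonic_rep:
  assumes Qd: "Qdefined par rt q h" and L0: "\<And>x. Lop par rt q l h x = 0"
  shows "rep (Suc n) (\<lambda>r. if r = 0 then (\<lambda>x. h x * complex_of_real (qpath par rt q x) / l ^ td x) else (\<lambda>_. 0)) h"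
proof -
  define s0 where "s0 x = h x * complex_of_real (qpath par rt q x) / l ^ td x" for x
  have "additive s0"
    unfolding additive_def
  proof (intro allI conjI)
    fix x
    define c where "c = complex_of_real (qpath par rt q x) / l ^ Suc (td x)"
    have eq: "s0 y = c * (complex_of_real (q x y) * h y)" if "y \<in> C x" for y
      unfolding s0_def c_def td_child[OF that] qpath_child[OF that] by (simp add: field_simps)
    have "(\<lambda>y. norm (c * (complex_of_real (q x y) * h y))) summable_on C x"
      using Qd unfolding Qdefined_def norm_mult[of c] by (intro summable_on_cmult_right) auto
    moreover have "(\<lambda>y. norm (s0 y)) summable_on C x \<longleftrightarrow> (\<lambda>y. norm (c * (complex_of_real (q x y) * h y))) summable_on C x"
      by (rule summable_on_cong) (simp add: eq)
    ultimately show "(\<lambda>y. norm (s0 y)) summable_on C x" by simp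
    have "((\<lambda>y. complex_of_real (q x y) * h y) has_sum Qop par rt q h x) (C x)"
      unfolding Qop_def using Qdefined_summable[OF Qd] by simp
    moreover have "Qop par rt q h x = l * h x" using L0[of x] unfolding Lop_def by simp
    ultimately have "((\<lambda>y. c * (complex_of_real (q x y) * h y)) has_sum c * (l * h x)) (C x)"
      by (intro has_sum_cmult_right) simp
    moreover have "c * (l * h x) = s0 x" unfolding c_def s0_def using lnz by (simp add: field_simps)
    moreover have "(s0 has_sum s0 x) (C x) \<longleftrightarrow> ((\<lambda>y. c * (complex_of_real (q x y) * h y)) has_sum s0 x) (C x)"
      by (rule has_sum_cong) (rule eq)
    ultimately show "(s0 has_sum s0 x) (C x)" by simp
  qed
  moreover have "h x = (\<Sum>r<Suc n. acoef r x * (if r = 0 then s0 else (\<lambda>_. 0)) x)" for x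
  proof -
    have "(\<Sum>r<Suc n. acoef r x * (if r = 0 then s0 else (\<lambda>_. 0)) x) = acoef 0 x * s0 x"
      by (subst sum.lessThan_Suc_shift) simp
    also have "\<dots> = h x" unfolding acoef_def s0_def using lnz qpath_pos[of x] by simp
    finally show ?thesis by simp
  qed
  ultimately show ?thesis unfolding rep_def s0_def[symmetric] using additive_zero by auto
qed

lemma polyharmonic_rep: "polyharmonic par rt q l n f \<Longrightarrow> \<exists>s. rep n s f"
proof (induction n arbitrary: f)
  case 0
  hence "f = (\<lambda>_. 0)" unfolding polyharmonic_def by simp
  thus ?case unfolding rep_def by simp
next
  case (Suc n)
  have Qf: "Qdefined par rt q f" and pL: "polyharmonic par rt q l n (Lop par rt q l f)"
    using Suc.prems polyharmonic_Suc by auto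
  obtain t where t: "rep n t (Lop par rt q l f)" using Suc.IH[OF pL] by blast
  define s' where "s' r = (if r = 0 then (\<lambda>_. 0) else (\<lambda>x. (- 1 / of_nat r) * t (r - 1) x))" for r
  define f' where "f' x = (\<Sum>r<Suc n. acoef r x * s' r x)" for x
  have rf': "rep (Suc n) s' f'"
    unfolding rep_def f'_def
  proof (intro conjI allI impI refl)
    fix r assume r: "r < Suc n"
    show "additive (s' r)"
    proof (cases r)
      case 0 thus ?thesis unfolding s'_def using additive_zero by simp
    next
      case (Suc r')
      hence "additive (t (r - 1))" using t r unfolding rep_def by auto
      hence "additive (\<lambda>x. (- 1 / of_nat r) * t (r - 1) x)" by (rule additive_cmult)
      thus ?thesis unfolding s'_def using Suc by simp
    qed
  qed
  have st: "Qdefined par rt q f' \<and> rep n (\<lambda>r x. - of_nat (Suc r) * s' (Suc r) x) (Lop par rt q l f')"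
    by (rule rep_step[OF rf'])
  have "(\<lambda>r x. - of_nat (Suc r) * s' (Suc r) x) = t"
  proof (intro ext)
    fix r x
    have "(of_nat (Suc r) :: complex) \<noteq> 0" by (simp only: of_nat_eq_0_iff)
    thus "- of_nat (Suc r) * s' (Suc r) x = t r x" unfolding s'_def by (simp add: field_simps)
  qed
  hence rLf': "rep n t (Lop par rt q l f')" using st by simp
  have LL: "Lop par rt q l f' x = Lop par rt q l f x" for x
    using rLf' t unfolding rep_def by simp
  define h where "h x = f x - f' x" for x
  have Qh: "Qdefined par rt q h" unfolding h_def using Qdefined_diff Qf st by blast
  have Lh: "Lop par rt q l h x = 0" for x
    unfolding h_def using Lop_diff[OF Qf conjunct1[OF st]] LL by simp
  obtain sh where rh: "rep (Suc n) sh h" using harmonic_rep[OF Qh Lh] by blast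
  have "rep (Suc n) (\<lambda>r x. s' r x + sh r x) (\<lambda>x. f' x + h x)" by (rule rep_add[OF rf' rh])
  moreover have "(\<lambda>x. f' x + h x) = f" unfolding h_def by auto
  ultimately show ?case by auto
qed


lemma dist_additive: "is_distribution par rt \<sigma> \<longleftrightarrow> additive (\<lambda>x. \<sigma> (B x))"
  unfolding is_distribution_def additive_def by simp

lemma dint_K: "dint par rt \<sigma> (\<lambda>\<xi>. Kderiv par rt q r x \<xi> l) = acoef r x * \<sigma> (B x)"
  unfolding Kderiv_eq by (rule dint_ind)

lemma represents_rep: "represents par rt q l n \<sigma> f \<Longrightarrow> rep n (\<lambda>r x. \<sigma> r (B x)) f"
  unfolding represents_def rep_def dist_additive dint_K by simp

lemma rep_represents:
  assumes "rep n s f"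
  shows "represents par rt q l n (\<lambda>r S. s r (SOME x. S = B x)) f"
proof -
  have e: "s r (SOME x. B y = B x) = s r y" if "r < n" for r y
  proof -
    have "B y = B (SOME x. B y = B x)" by (rule someI[of _ y]) simp
    moreover have "additive (s r)" using assms that unfolding rep_def by auto
    ultimately show ?thesis using bnd_consistent by metis
  qed
  have d: "(\<lambda>x. s r (SOME x'. B x = B x')) = s r" if "r < n" for r
    using e[OF that] by auto
  show ?thesis
    unfolding represents_def dist_additive dint_K
    using assms unfolding rep_def using e d by simp
qed

end

theorem proposition6p2:
  fixes par :: "'a::countable \<Rightarrow> 'a" and rt :: 'a and q :: "'a \<Rightarrow> 'a \<Rightarrow> real"
    and l :: complex and n :: nat
  assumes "is_rooted_tree par rt"
    and "tree_stochastic par rt q"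
    and "l \<noteq> 0" and "n \<ge> 1"
  shows "(\<forall>f. polyharmonic par rt q l n f \<longrightarrow> (\<exists>\<sigma>. represents par rt q l n \<sigma> f))
       \<and> (\<forall>f \<sigma> \<sigma>'. represents par rt q l n \<sigma> f \<and> represents par rt q l n \<sigma>' f
            \<longrightarrow> (\<forall>r<n. \<forall>x. \<sigma> r (bnd par rt x) = \<sigma>' r (bnd par rt x)))
       \<and> (\<forall>f \<sigma>. represents par rt q l n \<sigma> f \<longrightarrow> polyharmonic par rt q l n f)"
proof -
  interpret tr par rt q l using assms by unfold_locales
  have P1: "\<exists>\<sigma>. represents par rt q l n \<sigma> f" if "polyharmonic par rt q l n f" for f
    using polyharmonic_rep[OF that] rep_represents by blast
  have P2: "\<sigma> r (bnd par rt x) = \<sigma>' r (bnd par rt x)"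
    if "represents par rt q l n \<sigma> f" "represents par rt q l n \<sigma>' f" "r < n" for f \<sigma> \<sigma>' r x
  proof -
    have "rep n (\<lambda>r x. \<sigma> r (bnd par rt x) - \<sigma>' r (bnd par rt x)) (\<lambda>x. f x - f x)"
      by (rule rep_diff[OF represents_rep[OF that(1)] represents_rep[OF that(2)]])
    hence "rep n (\<lambda>r x. \<sigma> r (bnd par rt x) - \<sigma>' r (bnd par rt x)) (\<lambda>_. 0)" by simp
    from rep_zero[OF this that(3)] show ?thesis by simp
  qed
  have P3: "polyharmonic par rt q l n f" if "represents par rt q l n \<sigma> f" for f \<sigma>
    using rep_polyharmonic[OF represents_rep[OF that]] .
  show ?thesis using P1 P2 P3 by blast
qed

end
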